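(* Consider the control-affine system $\dot{x}(t) = f(x(t)) + g(x(t))u(t) + d(t)$ on $t \ge 0$, with $x(t)\in\mathbb{R}^n$, $u(t)\in\mathbb{R}^m$, $f,g$ continuously differentiable, and $d(t)\in\mathbb{R}^n$ the (unknown) disturbance. Let $\phi_t:\mathbb{R}^{nM}\to\mathbb{R}^{n\times p}$ be a representation map, $z(t)$ the time-delay embedding of past states, and $\theta^*\in\mathbb{R}^{p}$ a constant parameter such that $$d(t) = \phi_t(z(t))\theta^* + \gamma(t),$$ where $t\mapsto \phi_t(z(t))\theta^*$ is differentiable and the learning residual $\gamma$ is differentiable with $\|\gamma(t)\|\le\bar\gamma$ and $\|\dot\gamma(t)\|\le \bar d_\gamma$ for all $t\ge 0$, for positive constants $\bar\gamma,\bar d_\gamma$. Let $L\in\mathbb{R}^{n\times n}$ be symmetric positive definite, set $d_{model}(t)=\phi_t(z(t))\theta^*$, and define the estimator $$\dot{\xi} = -L\big(\xi + d_{model} + Lx + f(x) + g(x)u\big),\qquad \hat d = d_{model} + Lx + \xi,$$ with arbitrary initial condition $\xi(0)\in\mathbb{R}^n$. Then the disturbance estimation error $\tilde d = \hat d - d$ satisfies $$\|\tilde d(t)\| \le e^{-\lambda_{\min}(L)t}\|\tilde d(0)\| + \frac{\bar d_\gamma}{\lambda_{\min}(L)}\big(1-e^{-\lambda_{\min}(L)t}\big)\quad\text{for all } t\ge0,$$ i.e. $\tilde d$ converges exponentially to the ball $\{\|\tilde d\|\le \bar d_\gamma/\lambda_{\min}(L)\}$, whose radius depends only on $L$ and $\bar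 d_\gamma$ (and not on $\bar\gamma$).
   Context: $\lambda_{\min}(L)$ denotes the smallest eigenvalue of $L$. The time-delay embedding is $z=[x(t),x(t-\tau),\dots,x(t-M\tau)]$ (a finite window of past states); only the differentiability in time of $\phi_t(z(t))\theta^*$ is used. The auxiliary variable $\xi$ is introduced so that the state derivative $\dot x$ is not needed. All signals are assumed to be absolutely continuous / differentiable as required so that the estimator ODE has a solution. *)

theory Defs
  imports "HOL-Analysis.Analysis"
begin

definition matrix_eigenvalues :: "real^'n^'n \<Rightarrow> real set" where
  "matrix_eigenvalues A = {c. \<exists>v. v \<noteq> 0 \<and> A *v v = c *\<^sub>R v}"

definition lambda_min :: "real^'n^'n \<Rightarrow> real" where
  "lambda_min A = Min (matrix_eigenvalues A)"

definition symmetric_matrix :: "real^'n^'n \<Rightarrow> bool" where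
  "symmetric_matrix A \<longleftrightarrow> transpose A = A"

definition pos_def_matrix :: "real^'n^'n \<Rightarrow> bool" where
  "pos_def_matrix A \<longleftrightarrow> (\<forall>v. v \<noteq> 0 \<longrightarrow> v \<bullet> (A *v v) > 0)"

definition C1_map :: "('a::euclidean_space \<Rightarrow> 'b::euclidean_space) \<Rightarrow> bool" where
  "C1_map h \<longleftrightarrow> (\<exists>h'. (\<forall>y. (h has_derivative blinfun_apply (h' y)) (at y)) \<and> continuous_on UNIV h')"

definition delay_embedding :: "(real \<Rightarrow> 'a) \<Rightarrow> real \<Rightarrow> nat \<Rightarrow> real \<Rightarrow> 'a list" where
  "delay_embedding x \<tau> M t = map (\<lambda>j. x (t - real j * \<tau>)) [0..<Suc M]"

end

theory Submission
  imports Defs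
begin

lemma sym_inner:
  fixes L :: "real^'n^'n"
  assumes "symmetric_matrix L"
  shows "x \<bullet> (L *v y) = (L *v x) \<bullet> y"
proof -
  have "x \<bullet> (L *v y) = (x v* L) \<bullet> y" by (simp add: dot_lmul_matrix)
  also have "x v* L = transpose L *v x" by simp
  also have "\<dots> = L *v x" using assms by (simp add: symmetric_matrix_def)
  finally show ?thesis .
qed

lemma lambda_min_props:
  fixes L :: "real^'n^'n"
  assumes sym: "symmetric_matrix L" and pd: "pos_def_matrix L"
  shows "lambda_min L > 0 \<and> (\<forall>v. lambda_min L * (v \<bullet> v) \<le> v \<bullet> (L *v v))"
proof -
  let ?q = "\<lambda>v::real^'n. v \<bullet> (L *v v)"
  have ne: "sphere (0::real^'n) 1 \<noteq> {}"
  proof -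
    have "(axis undefined 1 :: real^'n) \<in> sphere 0 1" by simp
    then show ?thesis by blast
  qed
  have cont: "continuous_on (sphere 0 1) ?q"
    by (intro continuous_on_inner continuous_on_id matrix_vector_mult_linear_continuous_on)
  obtain v0 where v0: "v0 \<in> sphere 0 1" and v0min: "\<And>y. y \<in> sphere 0 1 \<Longrightarrow> ?q v0 \<le> ?q y"
    using continuous_attains_inf[OF compact_sphere ne cont] by blast
  define \<mu> where "\<mu> = ?q v0"
  have nv0: "norm v0 = 1" using v0 by simp
  have v0ne: "v0 \<noteq> 0" using nv0 by auto
  have mupos: "\<mu> > 0" using pd v0ne by (simp add: pos_def_matrix_def \<mu>_def)
  have qscale: "?q (c *\<^sub>R v) = c^2 * ?q v" for c v
    by (simp add: matrix_vector_mult_scaleR power2_eq_square)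
  have bound: "\<mu> * (v \<bullet> v) \<le> ?q v" for v
  proof (cases "v = 0")
    case True then show ?thesis by simp
  next
    case False
    let ?w = "(1 / norm v) *\<^sub>R v"
    have "?w \<in> sphere 0 1" using False by simp
    then have "\<mu> \<le> ?q ?w" using v0min \<mu>_def by blast
    also have "\<dots> = ?q v / (norm v)^2" by (simp only: qscale) (simp add: power_divide)
    finally have "\<mu> * (norm v)^2 \<le> ?q v" using False by (simp add: field_simps)
    then show ?thesis by (simp add: power2_norm_eq_inner)
  qed
  define B where "B = (\<lambda>w. L *v w - \<mu> *\<^sub>R w)"
  have Bpsd: "0 \<le> w \<bullet> B w" for w
    using bound[of w] by (simp add: B_def inner_diff_right)
  have Bsym: "a \<bullet> B b = b \<bullet> B a" for a b
  proof -
    have "a \<bullet> (L *v b) = b \<bullet> (L *v a)" using sym_inner[OF sym, of a b] by (metis inner_commute)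
    then show ?thesis by (simp add: B_def inner_diff_right inner_commute)
  qed
  have Bv00: "v0 \<bullet> B v0 = 0"
    using nv0 by (simp add: B_def inner_diff_right \<mu>_def power2_norm_eq_inner[symmetric])
  have Blin: "B (a + t *\<^sub>R b) = B a + t *\<^sub>R B b" for a b t
    by (simp add: B_def matrix_vector_right_distrib matrix_vector_mult_scaleR algebra_simps)
  define w where "w = B v0"
  define c where "c = w \<bullet> B w"
  have cnn: "c \<ge> 0" using Bpsd c_def by simp
  have expand: "(v0 + t *\<^sub>R w) \<bullet> B (v0 + t *\<^sub>R w) = 2 * t * (w \<bullet> w) + t^2 * c" for t
    using Bsym[of v0 w] Bv00
    by (simp add: Blin inner_add_left inner_add_right c_def w_def power2_eq_square algebra_simps)
  have "w \<bullet> w = 0"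
  proof (rule ccontr)
    assume "w \<bullet> w \<noteq> 0"
    then have wp: "w \<bullet> w > 0" by (simp add: order_le_neq_trans)
    define t where "t = - (w \<bullet> w) / (c + 1)"
    have "0 \<le> 2 * t * (w \<bullet> w) + t^2 * c" using Bpsd expand by metis
    also have "\<dots> = (w \<bullet> w)^2 * (c / (c+1)^2 - 2 / (c+1))"
      using cnn by (simp add: t_def field_simps power2_eq_square)
    also have "\<dots> < 0"
    proof -
      have c1: "c + 1 \<noteq> 0" using cnn by linarith
      have h: "2/(c+1) = 2*(c+1)/(c+1)^2" by (simp only: power2_eq_square nonzero_mult_divide_mult_cancel_right[OF c1])
      have "c / (c+1)^2 - 2 / (c+1) = (c - 2*(c+1)) / (c+1)^2"
        by (simp only: h diff_divide_distrib)
      also have "\<dots> < 0" using cnn by (intro divide_neg_pos) auto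
      finally show ?thesis using wp by (simp add: mult_pos_neg)
    qed
    finally show False by simp
  qed
  then have "B v0 = 0" by (simp add: w_def)
  then have eig0: "L *v v0 = \<mu> *\<^sub>R v0" by (simp add: B_def)
  let ?E = "matrix_eigenvalues L"
  have muE: "\<mu> \<in> ?E" using eig0 v0ne by (auto simp: matrix_eigenvalues_def)
  have Ege: "\<mu> \<le> c" if cE: "c \<in> ?E" for c
  proof -
    obtain v where v: "v \<noteq> 0" "L *v v = c *\<^sub>R v" using cE by (auto simp: matrix_eigenvalues_def)
    have "\<mu> * (v \<bullet> v) \<le> c * (v \<bullet> v)" using bound[of v] v by simp
    then show ?thesis using v by simp
  qed
  define ev where "ev c = (SOME v. v \<noteq> 0 \<and> L *v v = c *\<^sub>R v)" for c
  have ev: "ev c \<noteq> 0 \<and> L *v ev c = c *\<^sub>R ev c" if "c \<in> ?E" for c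
    using that unfolding ev_def matrix_eigenvalues_def by (rule CollectE) (rule someI_ex)
  have inj: "inj_on ev ?E"
  proof (rule inj_onI)
    fix a b assume a: "a \<in> ?E" and b: "b \<in> ?E" and eq: "ev a = ev b"
    have "a *\<^sub>R ev a = b *\<^sub>R ev a" using ev[OF a] ev[OF b] eq by metis
    then show "a = b" using ev[OF a] by simp
  qed
  have orth: "pairwise orthogonal (ev ` ?E)"
  proof (clarsimp simp: pairwise_def)
    fix a b assume a: "a \<in> ?E" and b: "b \<in> ?E" and ne: "ev a \<noteq> ev b"
    then have ab: "a \<noteq> b" by auto
    have "a * (ev a \<bullet> ev b) = (L *v ev a) \<bullet> ev b" using ev[OF a] by simp
    also have "\<dots> = ev a \<bullet> (L *v ev b)" using sym_inner[OF sym] by simp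
    also have "\<dots> = b * (ev a \<bullet> ev b)" using ev[OF b] by simp
    finally have "(a - b) * (ev a \<bullet> ev b) = 0" by (simp add: algebra_simps)
    then show "orthogonal (ev a) (ev b)" using ab by (simp add: orthogonal_def)
  qed
  have "0 \<notin> ev ` ?E" using ev by auto
  then have "independent (ev ` ?E)" using orth pairwise_orthogonal_independent by blast
  then have "finite (ev ` ?E)" using independent_bound by blast
  then have finE: "finite ?E" using inj finite_imageD by blast
  have "lambda_min L = \<mu>" unfolding lambda_min_def
    by (rule Min_eqI[OF finE]) (use Ege muE in auto)
  then show ?thesis using mupos bound by simp
qed

lemma comparison:
  fixes y y' :: "real \<Rightarrow> real" and lam c t :: real
  assumes lam: "lam > 0"
    and der: "\<And>s. s \<ge> 0 \<Longrightarrow> (y has_real_derivative y' s) (at s within {0..})"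
    and ineq: "\<And>s. s \<ge> 0 \<Longrightarrow> y' s \<le> - lam * y s + c"
    and t: "t \<ge> 0"
  shows "y t \<le> exp (- lam * t) * y 0 + c / lam * (1 - exp (- lam * t))"
proof -
  define k where "k s = exp (lam * s) * (y s - c / lam)" for s
  define k' where "k' s = exp (lam * s) * (lam * (y s - c / lam) + y' s)" for s
  have kder: "(k has_real_derivative k' s) (at s within {0..})" if "s \<ge> 0" for s
    unfolding k_def k'_def
    by (rule derivative_eq_intros der that refl)+ (simp add: algebra_simps)
  have k'np: "k' s \<le> 0" if "s \<ge> 0" for s
  proof -
    have "lam * (y s - c / lam) + y' s \<le> 0" using ineq[OF that] lam by (simp add: algebra_simps)
    then show ?thesis unfolding k'_def by (simp add: mult_nonneg_nonpos)
  qed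
  have "k t \<le> k 0"
  proof (rule DERIV_nonpos_imp_decreasing_open[OF t])
    fix s assume s: "0 < s" "s < t"
    have "(k has_real_derivative k' s) (at s within {0<..})"
      by (rule DERIV_subset[OF kder]) (use s in auto)
    then have "(k has_real_derivative k' s) (at s)"
      using s at_within_open[of s "{0<..}"] by simp
    then show "\<exists>y. (k has_real_derivative y) (at s) \<and> y \<le> 0" using k'np s by auto
  next
    have "continuous_on {0..} k"
      by (rule DERIV_continuous_on[OF kder]) simp
    then show "continuous_on {0..t} k" by (rule continuous_on_subset) auto
  qed
  then have "exp (lam * t) * (y t - c / lam) \<le> y 0 - c / lam" by (simp add: k_def)
  then have "exp (- lam * t) * (exp (lam * t) * (y t - c / lam)) \<le> exp (- lam * t) * (y 0 - c / lam)"
    by (simp add: mult_left_mono)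
  moreover have "exp (- lam * t) * exp (lam * t) = 1" by (simp add: exp_add[symmetric])
  ultimately have "y t - c / lam \<le> exp (- lam * t) * (y 0 - c / lam)"
    by (metis mult.assoc mult_1)
  then show ?thesis by (simp add: algebra_simps)
qed

theorem theorem1:
  fixes x :: "real \<Rightarrow> real^'n"
    and u :: "real \<Rightarrow> real^'m"
    and f :: "real^'n \<Rightarrow> real^'n"
    and g :: "real^'n \<Rightarrow> real^'m^'n"
    and d :: "real \<Rightarrow> real^'n"
    and \<phi> :: "real \<Rightarrow> (real^'n) list \<Rightarrow> real^'p^'n"
    and \<theta> :: "real^'p"
    and \<gamma> \<gamma>' :: "real \<Rightarrow> real^'n"
    and \<tau> :: real and M :: nat
    and \<gamma>bar d\<gamma> :: real
    and L :: "real^'n^'n"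
    and \<xi> :: "real \<Rightarrow> real^'n"
  defines "dmodel \<equiv> (\<lambda>t. \<phi> t (delay_embedding x \<tau> M t) *v \<theta>)"
  defines "dhat \<equiv> (\<lambda>t. dmodel t + L *v x t + \<xi> t)"
  assumes fC1: "C1_map f" and gC1: "C1_map g"
    and tau_pos: "\<tau> > 0"
    and sys: "\<And>t. t \<ge> 0 \<Longrightarrow>
       (x has_vector_derivative (f (x t) + g (x t) *v u t + d t)) (at t within {0..})"
    and d_decomp: "\<And>t. t \<ge> 0 \<Longrightarrow> d t = dmodel t + \<gamma> t"
    and dmodel_diff: "\<And>t. t \<ge> 0 \<Longrightarrow> dmodel differentiable (at t within {0..})"
    and gamma_deriv: "\<And>t. t \<ge> 0 \<Longrightarrow> (\<gamma> has_vector_derivative \<gamma>' t) (at t within {0..})"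
    and gamma_bound: "\<And>t. t \<ge> 0 \<Longrightarrow> norm (\<gamma> t) \<le> \<gamma>bar"
    and dgamma_bound: "\<And>t. t \<ge> 0 \<Longrightarrow> norm (\<gamma>' t) \<le> d\<gamma>"
    and gbar_pos: "\<gamma>bar > 0" and dg_pos: "d\<gamma> > 0"
    and L_sym: "symmetric_matrix L" and L_pd: "pos_def_matrix L"
    and est: "\<And>t. t \<ge> 0 \<Longrightarrow>
       (\<xi> has_vector_derivative
          (- (L *v (\<xi> t + dmodel t + L *v x t + f (x t) + g (x t) *v u t)))) (at t within {0..})"
  shows "\<forall>t\<ge>0. norm (dhat t - d t)
           \<le> exp (- lambda_min L * t) * norm (dhat 0 - d 0)
             + d\<gamma> / lambda_min L * (1 - exp (- lambda_min L * t))"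
proof -
  define lam where "lam = lambda_min L"
  have lampos: "lam > 0" and lamq: "\<And>v. lam * (v \<bullet> v) \<le> v \<bullet> (L *v v)"
    using lambda_min_props[OF L_sym L_pd] by (auto simp: lam_def)
  define E where "E t = L *v x t + \<xi> t - \<gamma> t" for t
  define E' where "E' t = - (L *v E t) - \<gamma>' t" for t
  have err: "dhat t - d t = E t" if "t \<ge> 0" for t
    using d_decomp[OF that] by (simp add: dhat_def E_def)
  have Eder: "(E has_vector_derivative E' t) (at t within {0..})" if t: "t \<ge> 0" for t
  proof -
    have "(E has_vector_derivative
        (L *v (f (x t) + g (x t) *v u t + d t) + (- (L *v (\<xi> t + dmodel t + L *v x t + f (x t) + g (x t) *v u t))) - \<gamma>' t))
        (at t within {0..})"
      unfolding E_def
      by (intro has_vector_derivative_diff has_vector_derivative_add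
          bounded_linear.has_vector_derivative[OF matrix_vector_mul_bounded_linear] sys est gamma_deriv t)
    moreover have "L *v (f (x t) + g (x t) *v u t + d t) + (- (L *v (\<xi> t + dmodel t + L *v x t + f (x t) + g (x t) *v u t))) - \<gamma>' t
        = E' t"
      using d_decomp[OF t] by (simp add: E'_def E_def algebra_simps)
    ultimately show ?thesis by simp
  qed
  have main: "norm (E t) \<le> exp (- lam * t) * norm (E 0) + d\<gamma> / lam * (1 - exp (- lam * t))"
    if t: "t \<ge> 0" for t
  proof (rule field_le_epsilon)
    fix \<epsilon> :: real assume ep: "\<epsilon> > 0"
    define V where "V s = sqrt (E s \<bullet> E s + \<epsilon>^2)" for s
    define V' where "V' s = (E s \<bullet> E' s) / V s" for s
    have Npos: "E s \<bullet> E s + \<epsilon>^2 > 0" for s using ep by (simp add: add_nonneg_pos)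
    have Vpos: "V s > 0" for s using Npos by (simp add: V_def)
    have Vder: "(V has_real_derivative V' s) (at s within {0..})" if s: "s \<ge> 0" for s
    proof -
      have "((\<lambda>s. E s \<bullet> E s) has_derivative (\<lambda>h. E s \<bullet> (h *\<^sub>R E' s) + (h *\<^sub>R E' s) \<bullet> E s)) (at s within {0..})"
        by (rule has_derivative_inner) (use Eder[OF s] in \<open>simp_all add: has_vector_derivative_def\<close>)
      then have "((\<lambda>s. E s \<bullet> E s) has_real_derivative 2 * (E s \<bullet> E' s)) (at s within {0..})"
        unfolding has_field_derivative_def
        by (rule has_derivative_eq_rhs) (auto simp: fun_eq_iff inner_commute algebra_simps)
      then have "((\<lambda>s. E s \<bullet> E s + \<epsilon>^2) has_real_derivative 2 * (E s \<bullet> E' s)) (at s within {0..})"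
        by (rule derivative_eq_intros) auto
      from DERIV_chain2[OF DERIV_real_sqrt[OF Npos[of s]] this]
      have "(V has_real_derivative inverse (sqrt (E s \<bullet> E s + \<epsilon>^2)) / 2 * (2 * (E s \<bullet> E' s))) (at s within {0..})"
        by (simp add: V_def[abs_def])
      moreover have "inverse (sqrt (E s \<bullet> E s + \<epsilon>^2)) / 2 * (2 * (E s \<bullet> E' s)) = V' s"
        by (simp add: V'_def V_def field_simps)
      ultimately show ?thesis by simp
    qed
    have Vineq: "V' s \<le> - lam * V s + (d\<gamma> + lam * \<epsilon>)" if s: "s \<ge> 0" for s
    proof -
      define a where "a = norm (E s)"
      have a0: "a \<ge> 0" by (simp add: a_def)
      have EE: "E s \<bullet> E s = a^2" by (simp add: a_def power2_norm_eq_inner)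
      have V2: "(V s)^2 = a^2 + \<epsilon>^2" using Npos[of s] by (simp add: V_def EE)
      have aV: "a \<le> V s" unfolding V_def EE
        by (rule real_le_rsqrt) simp
      have eV: "\<epsilon> \<le> V s" unfolding V_def EE
        by (rule real_le_rsqrt) simp
      have cs: "- (E s \<bullet> \<gamma>' s) \<le> a * d\<gamma>"
      proof -
        have "- (E s \<bullet> \<gamma>' s) \<le> norm (E s) * norm (\<gamma>' s)"
          using norm_cauchy_schwarz[of "- E s" "\<gamma>' s"] by simp
        also have "\<dots> \<le> a * d\<gamma>" using dgamma_bound[OF s] a0 by (simp add: a_def mult_left_mono)
        finally show ?thesis .
      qed
      have "E s \<bullet> E' s = - (E s \<bullet> (L *v E s)) - E s \<bullet> \<gamma>' s"
        by (simp add: E'_def inner_diff_right)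
      also have "\<dots> \<le> - lam * a^2 + a * d\<gamma>" using lamq[of "E s"] cs EE by simp
      finally have num: "E s \<bullet> E' s \<le> - lam * a^2 + a * d\<gamma>" .
      have "- lam * a^2 + a * d\<gamma> \<le> (- lam * V s + (d\<gamma> + lam * \<epsilon>)) * V s"
      proof -
        have "(- lam * V s + (d\<gamma> + lam * \<epsilon>)) * V s = - lam * (V s)^2 + d\<gamma> * V s + lam * \<epsilon> * V s"
          by (simp add: algebra_simps power2_eq_square)
        also have "\<dots> = - lam * a^2 - lam * \<epsilon>^2 + d\<gamma> * V s + lam * \<epsilon> * V s"
          using V2 by (simp add: algebra_simps)
        finally have eq: "(- lam * V s + (d\<gamma> + lam * \<epsilon>)) * V s = - lam * a^2 + d\<gamma> * V s + lam * \<epsilon> * (V s - \<epsilon>)"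
          by (simp add: algebra_simps power2_eq_square)
        have "a * d\<gamma> \<le> d\<gamma> * V s" using aV dg_pos by (simp add: mult.commute mult_left_mono)
        moreover have "0 \<le> lam * \<epsilon> * (V s - \<epsilon>)" using lampos ep eV by simp
        ultimately show ?thesis unfolding eq by linarith
      qed
      then have "E s \<bullet> E' s \<le> (- lam * V s + (d\<gamma> + lam * \<epsilon>)) * V s" using num by linarith
      then show ?thesis unfolding V'_def using Vpos[of s] by (simp add: divide_le_eq)
    qed
    have Vt: "V t \<le> exp (- lam * t) * V 0 + (d\<gamma> + lam * \<epsilon>) / lam * (1 - exp (- lam * t))"
      by (rule comparison[OF lampos Vder Vineq t])
    have "norm (E t) \<le> V t" unfolding V_def
      by (rule real_le_rsqrt) (simp add: power2_norm_eq_inner)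
    moreover have "V 0 \<le> norm (E 0) + \<epsilon>"
    proof -
      have "E 0 \<bullet> E 0 + \<epsilon>^2 \<le> (norm (E 0) + \<epsilon>)^2"
        using ep by (simp add: power2_norm_eq_inner[symmetric] power2_sum)
      then show ?thesis unfolding V_def using ep by (simp add: real_sqrt_le_iff real_le_lsqrt)
    qed
    moreover have "exp (- lam * t) \<le> 1" using lampos t by simp
    ultimately have "norm (E t) \<le> exp (- lam * t) * (norm (E 0) + \<epsilon>) + (d\<gamma> + lam * \<epsilon>) / lam * (1 - exp (- lam * t))"
      using Vt by (smt (verit, best) exp_gt_zero mult_left_mono)
    also have "\<dots> = exp (- lam * t) * norm (E 0) + d\<gamma> / lam * (1 - exp (- lam * t)) + \<epsilon>"
      using lampos by (simp add: field_simps)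
    finally show "norm (E t) \<le> exp (- lam * t) * norm (E 0) + d\<gamma> / lam * (1 - exp (- lam * t)) + \<epsilon>" .
  qed
  show ?thesis using main err by (simp add: lam_def)
qed

end
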